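(* Let $r_2>4$ and let $c$ be an integer with $0<c<\frac{r_2-2}{2}$. Then there is no graph with parameters $(r_2,r_3)$ where $r_3=\binom{r_2-1}{2}+c$.
   Context: All graphs are finite, simple and undirected. The $K_3$-degree of a vertex $v$ is the number of triangles of $G$ containing $v$. A graph $G$ has parameters $(r_2,r_3)$ if every vertex has degree $r_2$ and every vertex has $K_3$-degree $r_3$. *)

theory Defs
  imports Main
begin

definition simple_graph :: "'a set \<Rightarrow> ('a \<Rightarrow> 'a \<Rightarrow> bool) \<Rightarrow> bool" where
  "simple_graph V E \<longleftrightarrow> finite V \<and> (\<forall>x y. E x y \<longrightarrow> x \<in> V \<and> y \<in> V)
     \<and> (\<forall>x y. E x y \<longrightarrow> E y x) \<and> (\<forall>x. \<not> E x x)"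

definition degree :: "'a set \<Rightarrow> ('a \<Rightarrow> 'a \<Rightarrow> bool) \<Rightarrow> 'a \<Rightarrow> nat" where
  "degree V E v = card {u \<in> V. E v u}"

definition triangles_at :: "'a set \<Rightarrow> ('a \<Rightarrow> 'a \<Rightarrow> bool) \<Rightarrow> 'a \<Rightarrow> 'a set set" where
  "triangles_at V E v = {T. T \<subseteq> V \<and> card T = 3 \<and> v \<in> T \<and> (\<forall>x\<in>T. \<forall>y\<in>T. x \<noteq> y \<longrightarrow> E x y)}"

definition K3_degree :: "'a set \<Rightarrow> ('a \<Rightarrow> 'a \<Rightarrow> bool) \<Rightarrow> 'a \<Rightarrow> nat" where
  "K3_degree V E v = card (triangles_at V E v)"

definition has_parameters :: "'a set \<Rightarrow> ('a \<Rightarrow> 'a \<Rightarrow> bool) \<Rightarrow> nat \<Rightarrow> nat \<Rightarrow> bool" where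
  "has_parameters V E r2 r3 \<longleftrightarrow>
     (\<forall>v\<in>V. degree V E v = r2 \<and> K3_degree V E v = r3)"

end

theory Submission
  imports Defs
begin

definition nb :: "'a set \<Rightarrow> ('a \<Rightarrow> 'a \<Rightarrow> bool) \<Rightarrow> 'a \<Rightarrow> 'a set" where
  "nb V E v = {u \<in> V. E v u}"

definition nadj :: "('a \<Rightarrow> 'a \<Rightarrow> bool) \<Rightarrow> 'a set \<Rightarrow> 'a set \<Rightarrow> nat" where
  "nadj E S T = (\<Sum>a\<in>S. \<Sum>b\<in>T. of_bool (a \<noteq> b \<and> \<not> E a b))"

lemma nadj_Un_left:
  "finite S1 \<Longrightarrow> finite S2 \<Longrightarrow> S1 \<inter> S2 = {} \<Longrightarrow> nadj E (S1 \<union> S2) T = nadj E S1 T + nadj E S2 T"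
  unfolding nadj_def by (rule sum.union_disjoint)

lemma nadj_Un_right:
  "finite T1 \<Longrightarrow> finite T2 \<Longrightarrow> T1 \<inter> T2 = {} \<Longrightarrow> nadj E S (T1 \<union> T2) = nadj E S T1 + nadj E S T2"
  unfolding nadj_def by (simp add: sum.union_disjoint sum.distrib del: sum_of_bool_eq)

lemma nadj_sym:
  assumes "\<And>x y. E x y \<Longrightarrow> E y x"
  shows "nadj E S T = nadj E T S"
proof -
  have "nadj E S T = (\<Sum>b\<in>T. \<Sum>a\<in>S. of_bool (a \<noteq> b \<and> \<not> E a b))"
    unfolding nadj_def by (rule sum.swap)
  also have "\<dots> = nadj E T S" unfolding nadj_def
    by (intro sum.cong refl arg_cong[where f=of_bool]) (use assms in blast)
  finally show ?thesis .
qed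

lemma nadj_single:
  "finite T \<Longrightarrow> nadj E {z} T = card {b \<in> T. z \<noteq> b \<and> \<not> E z b}"
proof -
  assume "finite T"
  have "{b \<in> T. z \<noteq> b \<and> \<not> E z b} = T \<inter> {b. z \<noteq> b \<and> \<not> E z b}" by blast
  then show ?thesis unfolding nadj_def using \<open>finite T\<close> by simp
qed

lemma nadj_all:
  assumes "finite D" "\<And>y. y \<in> D \<Longrightarrow> y \<noteq> w \<and> \<not> E y w"
  shows "nadj E D {w} = card D"
  unfolding nadj_def using assms by simp

lemma nadj_ge_sub:
  "finite T \<Longrightarrow> T' \<subseteq> T \<Longrightarrow> nadj E S T' \<le> nadj E S T"
  unfolding nadj_def by (intro sum_mono sum_mono2) auto

definition tw :: "('a \<Rightarrow> 'a \<Rightarrow> bool) \<Rightarrow> 'a set \<Rightarrow> 'a set set" where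
  "tw E S = {T. T \<subseteq> S \<and> card T = 2 \<and> (\<forall>x\<in>T. \<forall>y\<in>T. x \<noteq> y \<longrightarrow> E x y)}"

lemma handshake:
  assumes "finite S" "\<And>x y. E x y \<Longrightarrow> E y x" "\<And>x. \<not> E x x"
  shows "(\<Sum>a\<in>S. \<Sum>b\<in>S. of_bool (E a b) :: nat) = 2 * card (tw E S)"
  using assms(1)
proof (induction S rule: finite_induct)
  case empty
  have "tw E {} = {}" unfolding tw_def by auto
  then show ?case by simp
next
  case (insert x S)
  let ?C = "{b \<in> S. E x b}"
  have row: "(\<Sum>b\<in>insert x S. of_bool (E x b) :: nat) = card ?C"
  proof -
    have "?C = insert x S \<inter> {b. E x b}" using assms(3) by blast
    then show ?thesis using insert by simp
  qed
  have col: "(\<Sum>a\<in>S. of_bool (E a x) :: nat) = card ?C"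
  proof -
    have "?C = S \<inter> {a. E a x}" using assms(2) by blast
    then show ?thesis using insert by simp
  qed
  have "(\<Sum>a\<in>insert x S. \<Sum>b\<in>insert x S. of_bool (E a b) :: nat)
      = (\<Sum>b\<in>insert x S. of_bool (E x b)) + (\<Sum>a\<in>S. \<Sum>b\<in>insert x S. of_bool (E a b))"
    using insert by simp
  also have "(\<Sum>a\<in>S. \<Sum>b\<in>insert x S. of_bool (E a b) :: nat)
      = (\<Sum>a\<in>S. of_bool (E a x)) + (\<Sum>a\<in>S. \<Sum>b\<in>S. of_bool (E a b))"
    using insert by (simp add: sum.distrib del: sum_of_bool_eq)
  finally have L: "(\<Sum>a\<in>insert x S. \<Sum>b\<in>insert x S. of_bool (E a b) :: nat)
      = 2 * card ?C + 2 * card (tw E S)"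
    using row col insert.IH by simp
  have eq: "tw E (insert x S) = tw E S \<union> (\<lambda>b. {x, b}) ` ?C"
  proof (rule set_eqI, rule iffI)
    fix T assume T: "T \<in> tw E (insert x S)"
    show "T \<in> tw E S \<union> (\<lambda>b. {x, b}) ` ?C"
    proof (cases "x \<in> T")
      case False
      with T show ?thesis unfolding tw_def by auto
    next
      case True
      from T have c2: "card T = 2" unfolding tw_def by auto
      then obtain a b where ab: "T = {a, b}" "a \<noteq> b" by (meson card_2_iff)
      show ?thesis
      proof (cases "a = x")
        case True
        with ab T insert.hyps have "b \<in> ?C" unfolding tw_def by auto
        with ab True show ?thesis by blast
      next
        case False
        with ab \<open>x \<in> T\<close> have "b = x" by auto
        with ab T False have "a \<in> ?C" unfolding tw_def using assms(2) by auto
        with ab \<open>b = x\<close> have "T = {x, a}" by auto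
        with \<open>a \<in> ?C\<close> show ?thesis by blast
      qed
    qed
  next
    fix T assume "T \<in> tw E S \<union> (\<lambda>b. {x, b}) ` ?C"
    then show "T \<in> tw E (insert x S)"
    proof
      assume "T \<in> tw E S" then show ?thesis unfolding tw_def by auto
    next
      assume "T \<in> (\<lambda>b. {x, b}) ` ?C"
      then obtain b where b: "b \<in> S" "E x b" "T = {x, b}" by auto
      with insert.hyps have "x \<noteq> b" by auto
      with b show ?thesis unfolding tw_def using assms(2) by auto
    qed
  qed
  have disj: "tw E S \<inter> (\<lambda>b. {x, b}) ` ?C = {}"
    using insert.hyps unfolding tw_def by auto
  have inj: "inj_on (\<lambda>b. {x, b}) ?C"
    using insert.hyps by (auto simp: inj_on_def doubleton_eq_iff)
  have fin: "finite (tw E S)" unfolding tw_def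
    by (rule finite_subset[of _ "Pow S"]) (use insert.hyps in auto)
  have "card (tw E (insert x S)) = card (tw E S) + card ?C"
    unfolding eq using disj inj fin insert.hyps
    by (simp add: card_Un_disjoint card_image)
  with L show ?case by simp
qed


lemma nadj_sum_single: "nadj E S T = (\<Sum>z\<in>S. nadj E {z} T)"
  unfolding nadj_def by simp

context
  fixes V :: "'a set" and E r r3
  assumes sg: "simple_graph V E" and hp: "has_parameters V E r r3"
begin

lemma finV: "finite V" using sg unfolding simple_graph_def by auto
lemma symE: "E x y \<Longrightarrow> E y x" using sg unfolding simple_graph_def by auto
lemma irrE: "\<not> E x x" using sg unfolding simple_graph_def by auto
lemma inV: "E x y \<Longrightarrow> x \<in> V \<and> y \<in> V" using sg unfolding simple_graph_def by auto

lemma fin_nb: "finite (nb V E v)" unfolding nb_def using finV by auto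
lemma card_nb: "v \<in> V \<Longrightarrow> card (nb V E v) = r"
  using hp unfolding has_parameters_def degree_def nb_def by auto

lemma nb_iff: "u \<in> nb V E v \<longleftrightarrow> E v u"
  unfolding nb_def using inV by auto

lemma tri:
  assumes v: "v \<in> V"
  shows "nadj E (nb V E v) (nb V E v) + 2 * r3 = r * (r - 1)"
proof -
  let ?N = "nb V E v"
  have tv: "triangles_at V E v = insert v ` tw E ?N"
  proof (rule set_eqI, rule iffI)
    fix T assume T: "T \<in> triangles_at V E v"
    then have TV: "T \<subseteq> V" and c3: "card T = 3" and vT: "v \<in> T"
      and adj: "\<forall>x\<in>T. \<forall>y\<in>T. x \<noteq> y \<longrightarrow> E x y"
      unfolding triangles_at_def by blast+
    have fT: "finite T" by (rule card_ge_0_finite) (simp add: c3)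
    have "T - {v} \<subseteq> ?N"
    proof
      fix x assume x: "x \<in> T - {v}"
      then have "x \<in> T" "x \<noteq> v" by auto
      then have "E v x" using adj vT by (metis (no_types))
      then show "x \<in> ?N" by (simp add: nb_iff)
    qed
    moreover have "card (T - {v}) = 2" using c3 vT fT by simp
    ultimately have "T - {v} \<in> tw E ?N" unfolding tw_def using adj by blast
    moreover have "T = insert v (T - {v})" using vT by blast
    ultimately show "T \<in> insert v ` tw E ?N" by blast
  next
    fix T assume "T \<in> insert v ` tw E ?N"
    then obtain P where P: "P \<in> tw E ?N" "T = insert v P" by auto
    have vP: "v \<notin> P" using P irrE unfolding tw_def by (auto simp: nb_iff)
    have fP: "finite P" by (rule card_ge_0_finite) (use P in \<open>simp add: tw_def\<close>)
    have "card T = 3" using P vP fP unfolding tw_def by simp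
    moreover have "T \<subseteq> V" using P v inV unfolding tw_def by (auto simp: nb_iff)
    moreover have "\<forall>x\<in>T. \<forall>y\<in>T. x \<noteq> y \<longrightarrow> E x y"
      using P symE unfolding tw_def by (auto simp: nb_iff)
    ultimately show "T \<in> triangles_at V E v" unfolding triangles_at_def using P by auto
  qed
  have inj: "inj_on (insert v) (tw E ?N)"
  proof (rule inj_onI)
    fix P Q assume "P \<in> tw E ?N" "Q \<in> tw E ?N" "insert v P = insert v Q"
    moreover have "v \<notin> P" "v \<notin> Q" using \<open>P \<in> tw E ?N\<close> \<open>Q \<in> tw E ?N\<close> irrE
      unfolding tw_def by (auto simp: nb_iff)
    ultimately show "P = Q" by (metis insert_ident)
  qed
  have "card (triangles_at V E v) = r3"
    using hp v unfolding has_parameters_def K3_degree_def by auto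
  then have r3: "r3 = card (tw E ?N)"
    unfolding tv by (simp add: card_image[OF inj])
  have hs: "(\<Sum>a\<in>?N. \<Sum>b\<in>?N. of_bool (E a b) :: nat) = 2 * r3"
    using handshake[OF fin_nb, of E v] symE irrE r3 by blast
  have "nadj E ?N ?N + (\<Sum>a\<in>?N. \<Sum>b\<in>?N. of_bool (E a b) :: nat)
      = (\<Sum>a\<in>?N. \<Sum>b\<in>?N. of_bool (a \<noteq> b) :: nat)"
    unfolding nadj_def sum.distrib[symmetric]
    by (intro sum.cong refl) (use irrE in auto)
  also have "\<dots> = (\<Sum>a\<in>?N. r - 1)"
  proof (intro sum.cong refl)
    fix a assume a: "a \<in> ?N"
    have "(\<Sum>b\<in>?N. of_bool (a \<noteq> b) :: nat) = card (?N \<inter> {b. a \<noteq> b})"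
      using fin_nb by simp
    also have "?N \<inter> {b. a \<noteq> b} = ?N - {a}" by auto
    also have "card (?N - {a}) = r - 1" using a card_nb[OF v] fin_nb by simp
    finally show "(\<Sum>b\<in>?N. of_bool (a \<noteq> b) :: nat) = r - 1" .
  qed
  also have "\<dots> = r * (r - 1)" using card_nb[OF v] by simp
  finally show ?thesis using hs by simp
qed

lemma hv:
  assumes v: "v \<in> V" and z: "z \<in> nb V E v"
  shows "nadj E {z} (nb V E v) = card (nb V E z - nb V E v - {v})"
proof -
  let ?X = "{b \<in> nb V E v. z \<noteq> b \<and> \<not> E z b}"
  have zV: "z \<in> V" using z inV by (auto simp: nb_iff)
  have e1: "nb V E v - {z} = (nb V E v \<inter> nb V E z) \<union> ?X"
    using irrE by (auto simp: nb_iff)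
  have c1: "card (nb V E v - {z}) = card (nb V E v \<inter> nb V E z) + card ?X"
    unfolding e1 by (rule card_Un_disjoint) (use fin_nb in \<open>auto simp: nb_iff intro: finite_subset[OF _ fin_nb]\<close>)
  have vz: "v \<in> nb V E z" using z symE by (auto simp: nb_iff)
  have vn: "v \<notin> nb V E v" using irrE by (auto simp: nb_iff)
  have e2: "nb V E z = insert v ((nb V E v \<inter> nb V E z) \<union> (nb V E z - nb V E v - {v}))"
    using vz by auto
  have c2: "card (nb V E z) = 1 + (card (nb V E v \<inter> nb V E z) + card (nb V E z - nb V E v - {v}))"
    apply (subst e2)
    apply (subst card_insert_disjoint)
      apply (use fin_nb vn in auto)[2]
    apply (subst card_Un_disjoint)
       apply (use fin_nb in auto)
    done
  show ?thesis
    using c1 c2 card_nb[OF v] card_nb[OF zV] z fin_nb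
    by (simp add: nadj_single)
qed


lemma side:
  assumes v: "v \<in> V" and w: "w \<in> nb V E v"
  shows "2 * card (nb V E v - nb V E w - {w}) + nadj E (nb V E v \<inter> nb V E w) (nb V E v \<inter> nb V E w)
           + 2 * nadj E (nb V E v \<inter> nb V E w) (nb V E v - nb V E w - {w}) \<le> nadj E (nb V E v) (nb V E v)"
    and "nadj E (nb V E v \<inter> nb V E w) (nb V E v) = nadj E (nb V E v \<inter> nb V E w) (nb V E v \<inter> nb V E w)
           + nadj E (nb V E v \<inter> nb V E w) (nb V E v - nb V E w - {w})"
    and "card (nb V E v \<inter> nb V E w) + card (nb V E v - nb V E w - {w}) + 1 = r"
    and "card (nb V E v - nb V E w - {w}) = card (nb V E w - nb V E v - {v})"
    and "nadj E {w} (nb V E v) = card (nb V E v - nb V E w - {w})"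
proof -
  define A where "A = nb V E v \<inter> nb V E w"
  define D where "D = nb V E v - nb V E w - {w}"
  have wn: "w \<notin> nb V E w" using irrE by (auto simp: nb_iff)
  have nbv: "nb V E v = {w} \<union> (A \<union> D)" using w wn unfolding A_def D_def by auto
  have fA: "finite A" and fD: "finite D" unfolding A_def D_def using fin_nb by auto
  have dAD: "A \<inter> D = {}" unfolding A_def D_def by auto
  have wAD: "{w} \<inter> (A \<union> D) = {}" using wn unfolding A_def D_def by auto
  have wV: "w \<in> V" using w inV by (auto simp: nb_iff)
  have s1: "nadj E {w} (nb V E v) = card D"
  proof -
    have "{b \<in> nb V E v. w \<noteq> b \<and> \<not> E w b} = D" unfolding D_def by (auto simp: nb_iff)
    then show ?thesis using nadj_single[OF fin_nb] by metis
  qed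
  have s0: "nadj E A {w} = 0"
    unfolding nadj_def A_def by (auto simp: nb_iff intro!: sum.neutral dest: symE)
  have s2: "nadj E A (nb V E v) = nadj E A A + nadj E A D"
    unfolding nbv using nadj_Un_right[of "{w}" "A \<union> D" E A] nadj_Un_right[of A D E A] fA fD dAD wAD s0 by simp
  have s3: "nadj E D {w} = card D"
    using fD by (rule nadj_all) (auto simp: D_def nb_iff dest: symE)
  have s4: "nadj E D ({w} \<union> A) \<le> nadj E D (nb V E v)"
    by (rule nadj_ge_sub[OF fin_nb]) (auto simp: nbv)
  have s5: "nadj E D ({w} \<union> A) = card D + nadj E A D"
    using nadj_Un_right[of "{w}" A E D] fA fD wAD s3 nadj_sym[of E D A, OF symE] by simp
  have tot: "nadj E (nb V E v) (nb V E v) = nadj E {w} (nb V E v) + (nadj E A (nb V E v) + nadj E D (nb V E v))"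
    apply (subst (1) nbv)
    using nadj_Un_left[of "{w}" "A \<union> D" E "nb V E v"] nadj_Un_left[of A D E "nb V E v"] fA fD dAD wAD by simp
  show "2 * card (nb V E v - nb V E w - {w}) + nadj E (nb V E v \<inter> nb V E w) (nb V E v \<inter> nb V E w)
           + 2 * nadj E (nb V E v \<inter> nb V E w) (nb V E v - nb V E w - {w}) \<le> nadj E (nb V E v) (nb V E v)"
    using tot s1 s2 s4 s5 unfolding A_def[symmetric] D_def[symmetric] by linarith
  show "nadj E (nb V E v \<inter> nb V E w) (nb V E v) = nadj E (nb V E v \<inter> nb V E w) (nb V E v \<inter> nb V E w)
           + nadj E (nb V E v \<inter> nb V E w) (nb V E v - nb V E w - {w})"
    using s2 unfolding A_def D_def .
  have "card (nb V E v) = 1 + (card A + card D)"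
    unfolding nbv using fA fD dAD wAD by (simp add: card_Un_disjoint)
  then show "card (nb V E v \<inter> nb V E w) + card (nb V E v - nb V E w - {w}) + 1 = r"
    using card_nb[OF v] unfolding A_def D_def by simp
  show "card (nb V E v - nb V E w - {w}) = card (nb V E w - nb V E v - {v})"
    using s1 hv[OF v w] unfolding D_def by simp
  show "nadj E {w} (nb V E v) = card (nb V E v - nb V E w - {w})"
    using s1 unfolding D_def .
qed

lemma key:
  assumes v: "v \<in> V" and w: "w \<in> nb V E v"
  shows "card (nb V E v \<inter> nb V E w) * card (nb V E w - nb V E v - {v})
     \<le> nadj E (nb V E v \<inter> nb V E w) (nb V E v) + nadj E (nb V E v \<inter> nb V E w) (nb V E w - nb V E v - {v})"
proof -
  define A where "A = nb V E v \<inter> nb V E w"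
  define B where "B = nb V E w - nb V E v - {v}"
  have fB: "finite B" unfolding B_def using fin_nb by auto
  have "card A * card B = (\<Sum>z\<in>A. card B)" by simp
  also have "\<dots> \<le> (\<Sum>z\<in>A. nadj E {z} (nb V E v) + nadj E {z} B)"
  proof (rule sum_mono)
    fix z assume zA: "z \<in> A"
    then have z: "z \<in> nb V E v" unfolding A_def by auto
    have "card (nb V E z \<inter> B) \<le> card (nb V E z - nb V E v - {v})"
      by (rule card_mono) (use fin_nb in \<open>auto simp: B_def\<close>)
    also have "\<dots> = nadj E {z} (nb V E v)" using hv[OF v z] by simp
    finally have i1: "card (nb V E z \<inter> B) \<le> nadj E {z} (nb V E v)" .
    have "{b \<in> B. z \<noteq> b \<and> \<not> E z b} = B - nb V E z"
      using z unfolding B_def by (auto simp: nb_iff)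
    then have i2: "nadj E {z} B = card (B - nb V E z)" using nadj_single[OF fB] by metis
    have "card B = card (B \<inter> nb V E z) + card (B - nb V E z)" using card_Int_Diff[OF fB] .
    then show "card B \<le> nadj E {z} (nb V E v) + nadj E {z} B"
      using i1 i2 by (simp add: Int_commute)
  qed
  also have "\<dots> = nadj E A (nb V E v) + nadj E A B"
    by (simp add: sum.distrib nadj_sum_single[of E A])
  finally show ?thesis unfolding A_def B_def .
qed
end


theorem proposition3p5:
  fixes V :: "'a set" and E :: "'a \<Rightarrow> 'a \<Rightarrow> bool"
    and r2 r3 :: nat and c :: int
  assumes "r2 > 4"
    and "0 < c" and "2 * c < int r2 - 2"
    and "int r3 = int ((r2 - 1) choose 2) + c"
  shows "\<not> (simple_graph V E \<and> V \<noteq> {} \<and> has_parameters V E r2 r3)"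
proof
  assume H: "simple_graph V E \<and> V \<noteq> {} \<and> has_parameters V E r2 r3"
  then have sg: "simple_graph V E" and hp: "has_parameters V E r2 r3" and ne: "V \<noteq> {}" by auto
  obtain v where v: "v \<in> V" using ne by auto
  let ?N = "nb V E v"
  define S where "S = nadj E ?N ?N"
  have tS: "S + 2 * r3 = r2 * (r2 - 1)" using tri[OF sg hp v] unfolding S_def .
  have ch: "2 * ((r2 - 1) choose 2) = (r2 - 1) * (r2 - 1 - 1)"
  proof -
    have "even ((r2 - 1) * (r2 - 1 - 1))" by simp
    then show ?thesis by (simp add: choose_two)
  qed
  have e: "int ((r2 - 1) * (r2 - 1 - 1)) = (int r2 - 1) * (int r2 - 2)"
    using assms(1) by (simp add: of_nat_diff)
  have e2: "int (2 * ((r2 - 1) choose 2)) = 2 * int ((r2 - 1) choose 2)" by simp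
  have r3i: "2 * int r3 = (int r2 - 1) * (int r2 - 2) + 2 * c"
    using assms(4) ch e e2 by linarith
  have Si: "int S = 2 * (int r2 - 1) - 2 * c"
  proof -
    have "int S = int (r2 * (r2 - 1)) - 2 * int r3" using tS by linarith
    also have "\<dots> = int r2 * (int r2 - 1) - (int r2 - 1) * (int r2 - 2) - 2 * c"
      using r3i assms(1) by (simp add: of_nat_diff)
    also have "\<dots> = 2 * (int r2 - 1) - 2 * c" by (simp add: algebra_simps)
    finally show ?thesis .
  qed
  have "\<exists>w\<in>?N. 2 \<le> nadj E {w} ?N"
  proof (rule ccontr)
    assume "\<not> ?thesis"
    then have "\<forall>w\<in>?N. nadj E {w} ?N \<le> 1" by auto
    then have "S \<le> (\<Sum>w\<in>?N. 1)" unfolding S_def nadj_sum_single[of E ?N]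
      by (intro sum_mono) auto
    then have "S \<le> r2" using card_nb[OF sg hp v] by simp
    then have "int S \<le> int r2" by simp
    then show False using Si assms(3) by (simp add: algebra_simps)
  qed
  then obtain w where w: "w \<in> ?N" and k2: "2 \<le> nadj E {w} ?N" by auto
  have wV: "w \<in> V" using w inV[OF sg hp] by (auto simp: nb_iff[OF sg hp])
  have vw: "v \<in> nb V E w" using w symE[OF sg hp] by (auto simp: nb_iff[OF sg hp])
  define A where "A = ?N \<inter> nb V E w"
  define D where "D = ?N - nb V E w - {w}"
  define B where "B = nb V E w - ?N - {v}"
  have A': "nb V E w \<inter> ?N = A" unfolding A_def by auto
  note s1 = side[OF sg hp v w, folded A_def D_def B_def]
  note s2 = side[OF sg hp wV vw, unfolded A', folded A_def D_def B_def]
  note ky = key[OF sg hp v w, folded A_def D_def B_def]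
  have Sw: "nadj E (nb V E w) (nb V E w) = S" using tri[OF sg hp wV] tS by linarith
  define k where "k = card D"
  define a where "a = card A"
  have kk: "2 \<le> k" using k2 s1(5) unfolding k_def by simp
  have kB: "card B = k" using s1(4) unfolding k_def by simp
  have ra: "a + k + 1 = r2" using s1(3) unfolding a_def k_def .
  have "2 * k * a \<le> 2 * (a * k)" by simp
  have akB: "a * card B = a * k" using kB by simp
  have big: "4 * k + 2 * (a * k) \<le> 2 * S"
    using s1(1) s1(2) s2(1) Sw ky kB akB unfolding k_def[symmetric] a_def[symmetric] S_def[symmetric]
    by linarith
  have "2 * a \<le> a * k" using kk by simp
  then have "2 * (r2 - 1) \<le> S" using big ra by linarith
  then have "int (2 * (r2 - 1)) \<le> int S" by (simp only: of_nat_le_iff)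
  then have "2 * (int r2 - 1) \<le> int S" using assms(1) by (simp add: of_nat_diff)
  then show False using Si assms(2) assms(1) by linarith
qed

end
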